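(* Let $\mathcal{I}_\nu$ be as in the context. Then: (a) If $\nu\in\left(-1,-\tfrac12\right]$, the function $x\mapsto \mathcal{I}_\nu'(x)$ is strictly log-concave on $(0,\infty)$. (b) If $\nu>-1$, the function $x\mapsto \mathcal{I}_\nu'(x)$ is strictly log-concave on $\left(0,\sqrt{2(\nu+3)}\right)$. (c) If $\nu>-\tfrac12$, there exists $x_\nu>\sqrt{2(\nu+3)}$ such that $x\mapsto\mathcal{I}_\nu'(x)$ is strictly log-concave on $(0,x_\nu)$ and strictly log-convex on $(x_\nu,\infty)$.
   Context: For $\nu>-1$ define $\mathcal{I}_\nu:\mathbb{R}\to[1,\infty)$ by $\mathcal{I}_\nu(x)=\sum_{n\ge0}\frac{(1/4)^n}{(\nu+1)_n\, n!}x^{2n}$, where $(a)_n=a(a+1)\cdots(a+n-1)$, $(a)_0=1$. Equivalently $\mathcal{I}_\nu(x)=2^\nu\Gamma(\nu+1)x^{-\nu}I_\nu(x)$ for $x>0$, where $I_\nu$ is the modified Bessel function of the first kind. Note $\mathcal{I}_\nu'(x)>0$ for $x>0$. *)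

theory Defs
  imports "HOL-Analysis.Analysis"
begin

definition Ical :: "real \<Rightarrow> real \<Rightarrow> real" where
  "Ical \<nu> x = (\<Sum>n. (1/4)^n / (pochhammer (\<nu> + 1) n * fact n) * x ^ (2*n))"

definition strict_convex_on :: "real set \<Rightarrow> (real \<Rightarrow> real) \<Rightarrow> bool" where
  "strict_convex_on S f \<longleftrightarrow>
     (\<forall>x\<in>S. \<forall>y\<in>S. x \<noteq> y \<longrightarrow> (\<forall>t. 0 < t \<and> t < 1 \<longrightarrow>
        f ((1 - t) * x + t * y) < (1 - t) * f x + t * f y))"

definition strict_log_concave_on :: "real set \<Rightarrow> (real \<Rightarrow> real) \<Rightarrow> bool" where
  "strict_log_concave_on S f \<longleftrightarrow> (\<forall>x\<in>S. 0 < f x) \<and> strict_convex_on S (\<lambda>x. - ln (f x))"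

definition strict_log_convex_on :: "real set \<Rightarrow> (real \<Rightarrow> real) \<Rightarrow> bool" where
  "strict_log_convex_on S f \<longleftrightarrow> (\<forall>x\<in>S. 0 < f x) \<and> strict_convex_on S (\<lambda>x. ln (f x))"

end

theory Submission
  imports Defs "HOL-Computational_Algebra.Formal_Power_Series"
begin


definition acoef :: "real \<Rightarrow> nat \<Rightarrow> real" where
  "acoef \<nu> n = (1/4)^n / (pochhammer (\<nu> + 1) n * fact n)"

definition Efps :: "real \<Rightarrow> real fps" where
  "Efps \<nu> = Abs_fps (\<lambda>k. if even k then acoef \<nu> (k div 2) else 0)"

lemma acoef_pos: "\<nu> > -1 \<Longrightarrow> acoef \<nu> n > 0"
  unfolding acoef_def by (intro divide_pos_pos mult_pos_pos pochhammer_pos) auto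

lemma acoef_Suc: "\<nu> > -1 \<Longrightarrow> acoef \<nu> (Suc n) = acoef \<nu> n / (4 * (real n + 1) * (\<nu> + real n + 1))"
  unfolding acoef_def using pochhammer_pos[of "\<nu>+1" n]
  by (simp add: pochhammer_Suc field_simps)

lemma summable_acoef:
  assumes "\<nu> > -1"
  shows "summable (\<lambda>n. acoef \<nu> n * x ^ (2*n))"
proof (rule summable_ratio_test[where c="1/2" and N="nat \<lceil>x^2\<rceil>"])
  fix n assume n: "nat \<lceil>x^2\<rceil> \<le> n"
  have x2: "x^2 \<le> real n" using n by linarith
  have pos: "\<nu> + real n + 1 > 0" using assms by simp
  have "4 * (real n + 1) * (\<nu> + real n + 1) \<ge> 2 * x^2"
  proof -
    have aux: "\<And>y P (z::real). 4*y \<le> P \<Longrightarrow> z < y \<Longrightarrow> 0 \<le> z \<Longrightarrow> 2*z \<le> P" by linarith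
    have h: "4 * (\<nu> + real n + 1) \<le> 4 * (real n + 1) * (\<nu> + real n + 1)"
    proof -
      have "1 * (\<nu> + real n + 1) \<le> (real n + 1) * (\<nu> + real n + 1)"
        by (rule mult_right_mono) (use pos in auto)
      thus ?thesis by linarith
    qed
    have "\<nu> + real n + 1 > x^2" using x2 assms by simp
    from aux[OF h this] show ?thesis by simp
  qed
  hence r: "x^2 / (4 * (real n + 1) * (\<nu> + real n + 1)) \<le> 1/2"
    using pos by (simp add: divide_le_eq)
  have e2: "x ^ (2 * Suc n) = x^(2*n) * x^2" by (simp add: power_add[symmetric])
  have nn: "0 \<le> acoef \<nu> n * x^(2*n) * (x^2 / (4 * (real n + 1) * (\<nu> + real n + 1)))"
    using acoef_pos[OF assms, of n] pos by (intro mult_nonneg_nonneg divide_nonneg_pos) (auto simp: power_mult)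
  have "acoef \<nu> (Suc n) * x ^ (2 * Suc n) = acoef \<nu> n * x^(2*n) * (x^2 / (4 * (real n + 1) * (\<nu> + real n + 1)))"
    unfolding e2 acoef_Suc[OF assms] by (simp add: field_simps)
  hence "norm (acoef \<nu> (Suc n) * x ^ (2 * Suc n)) = acoef \<nu> n * x^(2*n) * (x^2 / (4 * (real n + 1) * (\<nu> + real n + 1)))"
    using nn by (simp only: real_norm_def)
  also have "\<dots> \<le> acoef \<nu> n * x^(2*n) * (1/2)"
    using acoef_pos[OF assms, of n] r by (intro mult_left_mono) (auto simp: power_mult)
  also have "\<dots> = 1/2 * norm (acoef \<nu> n * x ^ (2 * n))"
    using acoef_pos[OF assms, of n] by (simp add: power_mult)
  finally show "norm (acoef \<nu> (Suc n) * x ^ (2 * Suc n)) \<le> 1/2 * norm (acoef \<nu> n * x ^ (2 * n))" .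
qed simp

lemma Efps_sums:
  assumes "\<nu> > -1"
  shows "(\<lambda>k. fps_nth (Efps \<nu>) k * x ^ k) sums Ical \<nu> x"
proof -
  have s: "(\<lambda>n. acoef \<nu> n * x ^ (2*n)) sums Ical \<nu> x"
    using summable_sums[OF summable_acoef[OF assms]] by (simp add: Ical_def acoef_def)
  have "(\<lambda>n. (\<lambda>k. fps_nth (Efps \<nu>) k * x ^ k) ((\<lambda>n. 2*n) n)) sums Ical \<nu> x"
    using s by (simp add: Efps_def)
  thus ?thesis
    by (subst (asm) sums_mono_reindex) (auto simp: strict_mono_def Efps_def elim!: evenE)
qed

lemma Efps_radius: "\<nu> > -1 \<Longrightarrow> fps_conv_radius (Efps \<nu>) = \<infinity>"
  unfolding fps_conv_radius_def
  by (rule conv_radius_inftyI'') (use Efps_sums in \<open>auto simp: sums_iff\<close>)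

lemma Ical_eval: "\<nu> > -1 \<Longrightarrow> Ical \<nu> = eval_fps (Efps \<nu>)"
  by (rule ext) (use Efps_sums in \<open>auto simp: eval_fps_def sums_iff\<close>)




definition Ffps :: "real \<Rightarrow> real fps" where "Ffps \<nu> = fps_deriv (Efps \<nu>)"

definition Th :: "real fps \<Rightarrow> real fps" where "Th G = fps_X * fps_deriv G"

lemma Th_nth [simp]: "fps_nth (Th G) n = of_nat n * fps_nth G n"
  by (cases n) (simp_all add: Th_def)

lemma Th_mult: "Th (G * H) = Th G * H + G * Th H"
  by (simp add: Th_def algebra_simps)

lemma F_nth_even: "fps_nth (Ffps \<nu>) (2*k) = 0"
  by (simp add: Ffps_def Efps_def)

lemma F_nth_odd: "fps_nth (Ffps \<nu>) (2*k+1) = (2*real k+2) * acoef \<nu> (Suc k)"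
proof -
  have "2*k+1+1 = 2 * Suc k" by simp
  thus ?thesis by (simp add: Ffps_def Efps_def)
qed

lemma F_ode_nth:
  assumes "\<nu> > -1"
  shows "(of_nat n ^ 2 + 2 * \<nu> * of_nat n - (2*\<nu>+1)) * fps_nth (Ffps \<nu>) n = (if n < 2 then 0 else fps_nth (Ffps \<nu>) (n-2))"
proof (cases "n < 2")
  case True
  then consider "n = 0" | "n = 1" by linarith
  thus ?thesis
  proof cases
    case 1 thus ?thesis using F_nth_even[of \<nu> 0] by simp
  qed simp
next
  case False
  then obtain m where n: "n = m + 2" by (metis add.commute le_Suc_ex not_less)
  show ?thesis
  proof (cases "even m")
    case True
    then obtain k where "m = 2*k" by blast
    hence "n = 2*(k+1)" "m = 2*k" using n by auto
    thus ?thesis using n F_nth_even[of \<nu> k] F_nth_even[of \<nu> "k+1"] by simp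
  next
    case False
    then obtain k where m: "m = 2*k+1" by (metis oddE)
    have n': "n = 2*(Suc k)+1" using n m by simp
    have rel: "acoef \<nu> (Suc (Suc k)) * (4 * (real k + 2) * (\<nu> + real k + 2)) = acoef \<nu> (Suc k)"
    proof -
      define D where "D = 4 * (real k + 2) * (\<nu> + real k + 2)"
      have D0: "D \<noteq> 0" using assms unfolding D_def by simp
      have "acoef \<nu> (Suc (Suc k)) = acoef \<nu> (Suc k) / D"
        using acoef_Suc[OF assms, of "Suc k"] unfolding D_def by (simp add: add_ac)
      thus ?thesis using D0 unfolding D_def[symmetric] by simp
    qed
    have e1: "fps_nth (Ffps \<nu>) n = (2*real k+4) * acoef \<nu> (Suc (Suc k))"
      using F_nth_odd[of \<nu> "Suc k"] n' by simp
    have e2: "fps_nth (Ffps \<nu>) (n-2) = (2*real k+2) * acoef \<nu> (Suc k)"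
      using F_nth_odd[of \<nu> k] n' by simp
    have rn: "real n = 2 * real k + 3" using n' by simp
    have "(real n ^ 2 + 2 * \<nu> * real n - (2*\<nu>+1)) * ((2*real k+4) * acoef \<nu> (Suc (Suc k))) = (2*real k+2) * acoef \<nu> (Suc k)"
    proof -
      have "(real n ^ 2 + 2 * \<nu> * real n - (2*\<nu>+1)) * ((2*real k+4) * acoef \<nu> (Suc (Suc k)))
          = (2*real k+2) * (acoef \<nu> (Suc (Suc k)) * (4 * (real k + 2) * (\<nu> + real k + 2)))"
        unfolding rn by (simp add: algebra_simps power2_eq_square)
      also have "\<dots> = (2*real k+2) * acoef \<nu> (Suc k)" by (simp only: rel)
      finally show ?thesis .
    qed
    thus ?thesis using n' e1 e2 by simp
  qed
qed




lemma X2_nth: "fps_nth (fps_X^2 * G) n = (if n < 2 then 0 else fps_nth G (n-2))"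
  by (rule fps_X_power_mult_nth)

lemma F_ode:
  assumes "\<nu> > -1"
  shows "Th (Th (Ffps \<nu>)) = fps_const (2*\<nu>+1) * Ffps \<nu> + fps_X^2 * Ffps \<nu> - fps_const (2*\<nu>) * Th (Ffps \<nu>)"
proof (rule fps_ext)
  fix n
  have "(of_nat n ^ 2 + 2 * \<nu> * of_nat n - (2*\<nu>+1)) * fps_nth (Ffps \<nu>) n = (if n < 2 then 0 else fps_nth (Ffps \<nu>) (n-2))"
    by (rule F_ode_nth[OF assms])
  thus "fps_nth (Th (Th (Ffps \<nu>))) n = fps_nth (fps_const (2*\<nu>+1) * Ffps \<nu> + fps_X^2 * Ffps \<nu> - fps_const (2*\<nu>) * Th (Ffps \<nu>)) n"
    by (simp add: X2_nth algebra_simps power2_eq_square numeral_2_eq_2)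
qed

definition "Dfps \<nu> = Th (Ffps \<nu>)"
definition "Afps \<nu> = Ffps \<nu> * Ffps \<nu>"
definition "Bfps \<nu> = Ffps \<nu> * Dfps \<nu>"
definition "Cfps \<nu> = Dfps \<nu> * Dfps \<nu>"
definition "Pfps \<nu> = Ffps \<nu> * fps_deriv (fps_deriv (Ffps \<nu>)) - fps_deriv (Ffps \<nu>) * fps_deriv (Ffps \<nu>)"

lemma ThA: "Th (Afps \<nu>) = Bfps \<nu> + Bfps \<nu>"
  by (simp add: Afps_def Bfps_def Dfps_def Th_mult algebra_simps)

lemma ThB: "\<nu> > -1 \<Longrightarrow> Th (Bfps \<nu>) = Cfps \<nu> + fps_const (2*\<nu>+1) * Afps \<nu> + fps_X^2 * Afps \<nu> - fps_const (2*\<nu>) * Bfps \<nu>"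
  by (simp add: Afps_def Bfps_def Cfps_def Dfps_def Th_mult F_ode algebra_simps)

lemma ThC: "\<nu> > -1 \<Longrightarrow> Th (Cfps \<nu>) = fps_const (2*\<nu>+1) * (Bfps \<nu> + Bfps \<nu>) + fps_X^2 * (Bfps \<nu> + Bfps \<nu>) - fps_const (4*\<nu>) * Cfps \<nu>"
proof -
  have "fps_const (4*\<nu>) = fps_const (2*\<nu>) + (fps_const (2*\<nu>) :: real fps)"
    by (simp flip: fps_const_add)
  thus "\<nu> > -1 \<Longrightarrow> ?thesis"
    by (simp add: Afps_def Bfps_def Cfps_def Dfps_def Th_mult F_ode algebra_simps)
qed

lemma XP: "\<nu> > -1 \<Longrightarrow> fps_X^2 * Pfps \<nu> = fps_const (2*\<nu>+1) * Afps \<nu> + fps_X^2 * Afps \<nu> - fps_const (2*\<nu>+1) * Bfps \<nu> - Cfps \<nu>"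
proof -
  assume nu: "\<nu> > -1"
  let ?F = "Ffps \<nu>"
  have h: "Th (Th ?F) = fps_X * fps_deriv ?F + fps_X^2 * fps_deriv (fps_deriv ?F)"
    by (simp add: Th_def algebra_simps power2_eq_square)
  have 1: "fps_X^2 * Pfps \<nu> = ?F * Th (Th ?F) - ?F * Th ?F - Th ?F * Th ?F"
    unfolding h by (simp add: Pfps_def Th_def algebra_simps power2_eq_square)
  have c: "fps_const (2*\<nu>+1) = fps_const (2*\<nu>) + (1 :: real fps)"
    by (simp flip: fps_const_add)
  show ?thesis unfolding 1 F_ode[OF nu] c
    by (simp add: Afps_def Bfps_def Cfps_def Dfps_def algebra_simps)
qed




lemma rec_alg:
  fixes n v An Bn Cn Am Bm :: real
  assumes "n * An = 2 * Bn" "n * Bn = Cn + (2  *  v+1) * An + Am - 2  *  v * Bn" "n * Cn = 2 * (2  *  v+1) * Bn + 2 * Bm - 4  *  v * Cn"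
    "(n-2) * Am = 2 * Bm"
  shows "An * (n-2) * (n+2  *  v) * (n+4  *  v+2) = 4 * (n+2  *  v-1) * Am"
  using assms by algebra

lemma Q_alg:
  fixes n v An Bn Cn Am Bm :: real
  assumes "n * An = 2 * Bn" "n * Bn = Cn + (2  *  v+1) * An + Am - 2  *  v * Bn" "n * Cn = 2 * (2  *  v+1) * Bn + 2 * Bm - 4  *  v * Cn"
    "(n-2) * Am = 2 * Bm"
  shows "((2  *  v+1) * An + Am - (2  *  v+1) * Bn - Cn)  *  2 * (n+2  *  v-1) = (n-4) * (2  *  v+1) * An"
  using assms by algebra

context
  fixes \<nu> :: real
  assumes nu: "\<nu> > -1"
begin

abbreviation "A n \<equiv> fps_nth (Afps \<nu>) n"
abbreviation "B n \<equiv> fps_nth (Bfps \<nu>) n"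
abbreviation "C n \<equiv> fps_nth (Cfps \<nu>) n"
abbreviation "P n \<equiv> fps_nth (Pfps \<nu>) n"

lemma eqA: "real n * A n = 2 * B n"
  using arg_cong[OF ThA[of \<nu>], of "\<lambda>G. fps_nth G n"] by simp

lemma eqB: "real n * B n = C n + (2*\<nu>+1) * A n + (if n < 2 then 0 else A (n-2)) - 2*\<nu> * B n"
  using arg_cong[OF ThB[OF nu], of "\<lambda>G. fps_nth G n"] by (simp add: X2_nth)

lemma eqC: "real n * C n = 2*(2*\<nu>+1) * B n + (if n < 2 then 0 else 2 * B (n-2)) - 4*\<nu> * C n"
proof -
  have "fps_nth (fps_X^2 * (Bfps \<nu> + Bfps \<nu>)) n = (if n < 2 then 0 else 2 * B (n-2))"
    unfolding X2_nth by simp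
  moreover have "fps_nth (fps_const (2*\<nu>+1) * (Bfps \<nu> + Bfps \<nu>)) n = 2*(2*\<nu>+1) * B n"
    by simp
  moreover have "fps_nth (fps_const (4*\<nu>) * Cfps \<nu>) n = 4*\<nu> * C n" by simp
  ultimately show ?thesis using arg_cong[OF ThC[OF nu], of "\<lambda>G. fps_nth G n"]
    by (simp only: fps_add_nth fps_sub_nth Th_nth)
qed

lemma eqP: "P k = (2*\<nu>+1) * A (k+2) + A k - (2*\<nu>+1) * B (k+2) - C (k+2)"
  using arg_cong[OF XP[OF nu], of "\<lambda>G. fps_nth G (k+2)"] by (simp add: X2_nth)

lemma Arec: "A (k+2) * real k * (real k + 2 + 2*\<nu>) * (real k + 4*\<nu> + 4) = 4 * (real k + 2*\<nu> + 1) * A k"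
proof -
  have "A (k+2) * (real (k+2) - 2) * (real (k+2) + 2*\<nu>) * (real (k+2) + 4*\<nu> + 2) = 4 * (real (k+2) + 2*\<nu> - 1) * A k"
    by (rule rec_alg[where Bn = "B (k+2)" and Cn = "C (k+2)" and Bm = "B k"])
       (use eqA[of "k+2"] eqB[of "k+2"] eqC[of "k+2"] eqA[of k] in simp_all)
  thus ?thesis by (simp add: algebra_simps)
qed

lemma Pform: "P k * 2 * (real k + 2*\<nu> + 1) = (real k - 2) * (2*\<nu>+1) * A (k+2)"
proof -
  have "((2*\<nu>+1) * A (k+2) + A k - (2*\<nu>+1) * B (k+2) - C (k+2)) * 2 * (real (k+2) + 2*\<nu> - 1) = (real (k+2) - 4) * (2*\<nu>+1) * A (k+2)"
    by (rule Q_alg[where Bn = "B (k+2)" and Cn = "C (k+2)" and Bm = "B k"])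
       (use eqA[of "k+2"] eqB[of "k+2"] eqC[of "k+2"] eqA[of k] in simp_all)
  thus ?thesis unfolding eqP[symmetric] by (simp add: algebra_simps)
qed

lemma P0: "P 0 = - A 2"
proof -
  have "real 2 * A 2 = 2 * B 2" by (rule eqA)
  moreover have "real 2 * B 2 = C 2 + (2*\<nu>+1) * A 2 + A 0 - 2*\<nu> * B 2" using eqB[of 2] by simp
  moreover have "A 0 = 0" by (simp add: Afps_def F_nth_even[of \<nu> 0, simplified])
  ultimately show ?thesis using eqP[of 0] by (simp add: algebra_simps numeral_2_eq_2)
qed

lemma F1: "fps_nth (Ffps \<nu>) 1 = 1 / (2*(\<nu>+1))"
proof -
  have "4 * \<nu> + 4 \<noteq> 0" "2 * \<nu> + 2 \<noteq> 0" using nu by auto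
  thus ?thesis using F_nth_odd[of \<nu> 0] nu by (simp add: acoef_def field_simps)
qed

lemma A1: "A 1 = 0"
  using F_nth_even[of \<nu> 0] by (simp add: Afps_def fps_mult_nth)

lemma A2: "A 2 = (1 / (2*(\<nu>+1)))^2"
  using F_nth_even[of \<nu> 0] F_nth_even[of \<nu> 1] F1 by (simp add: Afps_def fps_mult_nth numeral_2_eq_2 power2_eq_square)

lemma A2_pos: "A 2 > 0"
  unfolding A2 using nu by simp

lemma A_parity: "A (2*k+1) = 0 \<and> A (2*k+2) > 0"
proof (induction k)
  case 0 thus ?case using A1 A2_pos by (simp add: numeral_2_eq_2)
next
  case (Suc k)
  have p1: "real (2*k+1) * (real (2*k+1) + 2 + 2*\<nu>) * (real (2*k+1) + 4*\<nu> + 4) > 0"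
    using nu by (intro mult_pos_pos) auto
  have p2: "real (2*k+2) * (real (2*k+2) + 2 + 2*\<nu>) * (real (2*k+2) + 4*\<nu> + 4) > 0"
    using nu by (intro mult_pos_pos) auto
  have r1: "A (2*k+1+2) * (real (2*k+1) * (real (2*k+1) + 2 + 2*\<nu>) * (real (2*k+1) + 4*\<nu> + 4)) = 0"
    using Arec[of "2*k+1"] Suc.IH by (simp add: mult.assoc)
  have r2: "A (2*k+2+2) * (real (2*k+2) * (real (2*k+2) + 2 + 2*\<nu>) * (real (2*k+2) + 4*\<nu> + 4)) > 0"
  proof -
    have "A (2*k+2+2) * (real (2*k+2) * (real (2*k+2) + 2 + 2*\<nu>) * (real (2*k+2) + 4*\<nu> + 4))
        = 4 * (real (2*k+2) + 2*\<nu> + 1) * A (2*k+2)"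
      using Arec[of "2*k+2"] by (simp add: mult.assoc)
    also have "\<dots> > 0" using Suc.IH nu by (intro mult_pos_pos) auto
    finally show ?thesis .
  qed
  have "A (2*k+1+2) = 0" using r1 p1 by (metis mult_eq_0_iff order_less_irrefl)
  moreover have "A (2*k+2+2) > 0" using zero_less_mult_pos2[OF r2 p2] .
  ultimately show ?case by (simp add: add_ac)
qed

lemma A_nonneg: "A n \<ge> 0"
proof (cases n)
  case 0 thus ?thesis by (simp add: Afps_def F_nth_even[of \<nu> 0, simplified])
next
  case (Suc m)
  show ?thesis
  proof (cases "even m")
    case True then obtain k where "m = 2*k" by blast
    thus ?thesis using A_parity[of k] Suc by simp
  next
    case False then obtain k where "m = 2*k+1" by (metis oddE)
    thus ?thesis using A_parity[of k] Suc by (simp add: less_imp_le)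
  qed
qed

lemma A_odd: "odd n \<Longrightarrow> A n = 0"
  using A_parity by (metis Suc_eq_plus1 oddE)

lemma P_odd: "odd k \<Longrightarrow> P k = 0"
proof -
  assume "odd k"
  hence "A (k+2) = 0" by (intro A_odd) simp
  moreover have "real k + 2*\<nu> + 1 > 0" using nu \<open>odd k\<close> by (cases k) auto
  ultimately show "P k = 0" using Pform[of k] by simp
qed

lemma P_sign_neg: "2*\<nu>+1 \<le> 0 \<Longrightarrow> k \<ge> 1 \<Longrightarrow> P k \<le> 0"
proof -
  assume c: "2*\<nu>+1 \<le> 0" and k: "k \<ge> 1"
  have d: "2 * (real k + 2*\<nu> + 1) > 0" using nu k by simp
  show "P k \<le> 0"
  proof (cases "k = 1")
    case True thus ?thesis using P_odd by simp
  next
    case False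
    hence "(real k - 2) * (2*\<nu>+1) * A (k+2) \<le> 0"
      using k c A_nonneg[of "k+2"] by (intro mult_nonpos_nonneg mult_nonneg_nonpos) auto
    hence "P k * (2 * (real k + 2*\<nu> + 1)) \<le> 0" using Pform[of k] by (simp add: mult.assoc)
    thus ?thesis using d by (simp add: mult_le_0_iff)
  qed
qed

lemma P_sign_pos: "2*\<nu>+1 \<ge> 0 \<Longrightarrow> k \<ge> 1 \<Longrightarrow> P k \<ge> 0"
proof -
  assume c: "2*\<nu>+1 \<ge> 0" and k: "k \<ge> 1"
  have d: "2 * (real k + 2*\<nu> + 1) > 0" using nu k by simp
  show "P k \<ge> 0"
  proof (cases "k = 1")
    case True thus ?thesis using P_odd by simp
  next
    case False
    hence "(real k - 2) * (2*\<nu>+1) * A (k+2) \<ge> 0"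
      using k c A_nonneg[of "k+2"] by (intro mult_nonneg_nonneg) auto
    hence "P k * (2 * (real k + 2*\<nu> + 1)) \<ge> 0" using Pform[of k] by (simp add: mult.assoc)
    thus ?thesis using d by (simp add: zero_le_mult_iff)
  qed
qed

lemma P4_pos: "2*\<nu>+1 > 0 \<Longrightarrow> P 4 > 0"
proof -
  assume c: "2*\<nu>+1 > 0"
  have "A 6 > 0" using A_parity[of 2] by simp
  hence "P 4 * (2 * (4 + 2*\<nu> + 1)) > 0" using Pform[of 4] c by (simp add: mult.assoc)
  moreover have "2 * (4 + 2*\<nu> + 1) > 0" using nu by simp
  ultimately show ?thesis by (simp add: zero_less_mult_iff)
qed

end



lemma alg_step:
  fixes Vj Vs c a a' S s j n :: real
  assumes "Vj * (2 * j + 2 * n + 1) = c * a * S" "Vs * (2 * j + 2 * n + 3) = c * a' * S * s"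
    "a' * (2 * j + 2) * (2 * j + 4 + 2 * n) * (2 * j + 4 * n + 6) = 4 * (2 * j + 2 * n + 3) * a"
    "s = 2 * n + 6"
  shows "Vs * (j + 1) * ((j + n + 2) * (j + 2 * n + 3)) * (2 * j + 2 * n + 3) = Vj * ((2 * j + 2 * n + 1) * (n + 3)) * (2 * j + 2 * n + 3)"
  using assms by algebra

lemma alg_V2:
  fixes V a2 a4 a6 n :: real
  assumes "a4 * 2 * (4 + 2 * n) * (6 + 4 * n) = 4 * (3 + 2 * n) * a2"
    "a6 * 4 * (6 + 2 * n) * (8 + 4 * n) = 4 * (5 + 2 * n) * a4"
    "V * (4 + 2 * n + 1) = (2 * n + 1) * a6 * (2 * n + 6)^2"
  shows "V * 2 * (2 * (n + 2)^2) * (2 * (n + 3) * (2 * n + 5) * (2 * n + 3)) = ((2 * n + 1) * (n + 3)) * a2 * (2 * (n + 3) * (2 * n + 5) * (2 * n + 3))"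
  using assms by algebra

lemma alg_U:
  fixes p V c a S j n :: real
  assumes "p * 2 * (2 * j + 2 * n + 1) = (2 * j - 2) * c * a" "V * (2 * j + 2 * n + 1) = c * a * S"
  shows "(p * S) * (2 * j + 2 * n + 1) * 2 = (2 * (j - 1)) * (V * (2 * j + 2 * n + 1))"
  using assms by algebra

context
  fixes \<nu> :: real
  assumes nu: "\<nu> > -1/2"
begin

lemma nu1: "\<nu> > -1" using nu by simp

definition "sv = 2*\<nu>+6"
definition "V j = (2*\<nu>+1) * A \<nu> (2*j+2) * sv^j / (2*real j+2*\<nu>+1)"

lemma V_nonneg: "V j \<ge> 0"
  unfolding V_def using nu A_nonneg[OF nu1, of "2*j+2"] by (simp add: sv_def)

lemma V_eq: "V j * (2*real j+2*\<nu>+1) = (2*\<nu>+1) * A \<nu> (2*j+2) * sv^j"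
  unfolding V_def using nu by simp

lemma V_step: "V (Suc j) * real (Suc j) * ((real j+\<nu>+2) * (real j+2*\<nu>+3)) = V j * ((2*real j+2*\<nu>+1) * (\<nu>+3))"
proof -
  have h1: "V j * (2*real j+2*\<nu>+1) = (2*\<nu>+1) * A \<nu> (2*j+2) * sv^j" by (rule V_eq)
  have h2: "V (Suc j) * (2*real j+2*\<nu>+3) = (2*\<nu>+1) * A \<nu> (2*j+4) * sv^j * sv"
  proof -
    have idx: "2 * Suc j + 2 = 2*j+4" by simp
    show ?thesis using V_eq[of "Suc j", unfolded idx] by (simp add: algebra_simps)
  qed
  have h3: "A \<nu> (2*j+4) * (2*real j+2) * (2*real j + 4 + 2*\<nu>) * (2*real j + 4*\<nu> + 6) = 4 * (2*real j + 2*\<nu> + 3) * A \<nu> (2*j+2)"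
  proof -
    have idx: "2*j+2+2 = 2*j+4" by simp
    show ?thesis using Arec[OF nu1, of "2*j+2", unfolded idx] by (simp add: algebra_simps)
  qed
  have "V (Suc j) * (real j + 1) * ((real j+\<nu>+2) * (real j+2*\<nu>+3)) * (2*real j+2*\<nu>+3) = V j * ((2*real j+2*\<nu>+1) * (\<nu>+3)) * (2*real j+2*\<nu>+3)"
    by (rule alg_step[OF h1 h2 h3]) (simp add: sv_def)
  moreover have "2*real j+2*\<nu>+3 \<noteq> 0" using nu by simp
  ultimately show ?thesis by (simp add: add.commute)
qed

lemma V_ratio: "V (Suc j) * real (Suc j) \<le> V j"
proof -
  have pos: "(real j+\<nu>+2) * (real j+2*\<nu>+3) > 0" using nu by simp
  have le: "(2*real j+2*\<nu>+1) * (\<nu>+3) \<le> (real j+\<nu>+2) * (real j+2*\<nu>+3)"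
  proof -
    have "(real j+\<nu>+2) * (real j+2*\<nu>+3) - (2*real j+2*\<nu>+1) * (\<nu>+3) = real j * real j - real j + 3 + \<nu> * real j"
      by (simp add: algebra_simps)
    also have "\<dots> \<ge> real j * real j - 3/2 * real j + 3"
    proof -
      have "\<nu> * real j \<ge> (-1/2) * real j" using nu by (intro mult_right_mono) auto
      thus ?thesis by simp
    qed
    also have "real j * real j - 3/2 * real j + 3 = (real j - 3/4)^2 + 39/16" by (simp add: power2_eq_square algebra_simps)
    finally show ?thesis using zero_le_power2[of "real j - 3/4"] by linarith
  qed
  have "V (Suc j) * real (Suc j) * ((real j+\<nu>+2) * (real j+2*\<nu>+3)) \<le> V j * ((real j+\<nu>+2) * (real j+2*\<nu>+3))"
    unfolding V_step using le V_nonneg by (intro mult_left_mono) auto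
  thus ?thesis using pos by (rule mult_right_le_imp_le)
qed

lemma V2: "V 2 * 2 < A \<nu> 2"
proof -
  have a4: "A \<nu> 4 * 2 * (4 + 2*\<nu>) * (6 + 4*\<nu>) = 4 * (3 + 2*\<nu>) * A \<nu> 2"
    using Arec[OF nu1, of 2] by (simp add: algebra_simps)
  have a6: "A \<nu> 6 * 4 * (6 + 2*\<nu>) * (8 + 4*\<nu>) = 4 * (5 + 2*\<nu>) * A \<nu> 4"
    using Arec[OF nu1, of 4] by (simp add: algebra_simps)
  have v: "V 2 * (4 + 2*\<nu>+1) = (2*\<nu>+1) * A \<nu> 6 * (2*\<nu>+6)^2"
    using V_eq[of 2] by (simp add: sv_def)
  have "V 2 * 2 * (2*(\<nu>+2)^2) * (2*(\<nu>+3) * (2*\<nu>+5) * (2*\<nu>+3)) = ((2*\<nu>+1)*(\<nu>+3)) * A \<nu> 2 * (2*(\<nu>+3) * (2*\<nu>+5) * (2*\<nu>+3))"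
    by (rule alg_V2[OF a4 a6 v])
  moreover have "2*(\<nu>+3) * (2*\<nu>+5) * (2*\<nu>+3) \<noteq> 0" using nu by simp
  ultimately have e: "V 2 * 2 * (2 * (\<nu>+2)^2) = ((2*\<nu>+1)*(\<nu>+3)) * A \<nu> 2"
    by (metis mult_right_cancel)
  have "((2*\<nu>+1)*(\<nu>+3)) * A \<nu> 2 < (2 * (\<nu>+2)^2) * A \<nu> 2"
    using A2_pos[OF nu1] nu by (intro mult_strict_right_mono) (auto simp: power2_eq_square algebra_simps)
  hence "V 2 * 2 * (2 * (\<nu>+2)^2) < 1 * (2 * (\<nu>+2)^2) * A \<nu> 2" using e by simp
  moreover have "2 * (\<nu>+2)^2 > 0" using nu by simp
  ultimately show ?thesis by (simp add: mult.commute mult.left_commute)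
qed

lemma V_bound: "j \<ge> 2 \<Longrightarrow> V j * fact j < A \<nu> 2"
proof (induction j rule: dec_induct)
  case base thus ?case using V2 by (simp add: numeral_2_eq_2)
next
  case (step j)
  have "V (Suc j) * fact (Suc j) = (V (Suc j) * real (Suc j)) * fact j" by (simp add: algebra_simps)
  also have "\<dots> \<le> V j * fact j" using V_ratio[of j] by (intro mult_right_mono) auto
  finally show ?case using step.IH by linarith
qed

lemma U_bound:
  assumes j: "j \<ge> 2"
  shows "P \<nu> (2*j) * sv^j < A \<nu> 2 * (1/fact (j-1) - 1/fact j)"
proof -
  have d: "2*real j+2*\<nu>+1 > 0" using nu by simp
  have "P \<nu> (2*j) * 2 * (real (2*j) + 2*\<nu> + 1) = (real (2*j) - 2) * (2*\<nu>+1) * A \<nu> (2*j+2)"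
    by (rule Pform[OF nu1])
  hence p: "P \<nu> (2*j) * 2 * (2*real j + 2*\<nu> + 1) = (2*real j - 2) * (2*\<nu>+1) * A \<nu> (2*j+2)" by simp
  have "(P \<nu> (2*j) * sv^j) * (2*real j+2*\<nu>+1) * 2 = (2*(real j - 1)) * (V j * (2*real j+2*\<nu>+1))"
    by (rule alg_U[OF p V_eq])
  hence "P \<nu> (2*j) * (sv^j * 2) = (2 * real j - 2) * V j" using d by simp
  hence e: "P \<nu> (2*j) * sv^j = (real j - 1) * V j" by (simp add: algebra_simps)
  have f: "fact j = real j * fact (j-1)" using j by (metis fact_nonzero fact_reduce of_nat_eq_0_iff not_less_eq_eq numeral_2_eq_2 zero_less_Suc le_0_eq gr0I)
  have "1/fact (j-1) - 1/fact j = (real j - 1) / fact j"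
    unfolding f using j by (simp add: field_simps)
  moreover have "(real j - 1) * V j < (real j - 1) * (A \<nu> 2 / fact j)"
    using V_bound[OF j] j by (intro mult_strict_left_mono) (auto simp: field_simps)
  ultimately show ?thesis unfolding e by (simp add: mult.commute)
qed

end



lemma strict_convex_deriv2:
  fixes g gd gdd :: "real \<Rightarrow> real"
  assumes S: "\<And>x y z. x \<in> S \<Longrightarrow> y \<in> S \<Longrightarrow> x \<le> z \<Longrightarrow> z \<le> y \<Longrightarrow> z \<in> S"
    and d1: "\<And>x. x \<in> S \<Longrightarrow> (g has_real_derivative gd x) (at x)"
    and d2: "\<And>x. x \<in> S \<Longrightarrow> (gd has_real_derivative gdd x) (at x)"
    and pos: "\<And>x. x \<in> S \<Longrightarrow> gdd x > 0"
  shows "strict_convex_on S g"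
proof -
  have inc: "gd u < gd v" if "u \<in> S" "v \<in> S" "u < v" for u v
  proof -
    have "\<And>w. u \<le> w \<Longrightarrow> w \<le> v \<Longrightarrow> (gd has_real_derivative gdd w) (at w)"
      using d2 S[OF that(1) that(2)] by blast
    from MVT2[OF \<open>u < v\<close> this] obtain z where z: "u < z" "z < v" "gd v - gd u = (v - u) * gdd z"
      by blast
    have "z \<in> S" using S that z by (meson less_imp_le)
    hence "(v - u) * gdd z > 0" using pos that by simp
    thus ?thesis using z by simp
  qed
  have main: "g ((1 - t) * x + t * y) < (1 - t) * g x + t * g y"
    if xy: "x \<in> S" "y \<in> S" "x < y" and t: "0 < t" "t < 1" for x y t
  proof -
    define z where "z = (1 - t) * x + t * y"
    have e1: "z = x + t * (y - x)" "z = y - (1 - t) * (y - x)" unfolding z_def by (simp_all add: algebra_simps)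
    have "t * (y - x) > 0" "(1 - t) * (y - x) > 0" using xy t by simp_all
    hence zx: "x < z" and zy: "z < y" using e1 by linarith+
    have zS: "z \<in> S" using S xy zx zy by (meson less_imp_le)
    have "\<And>w. x \<le> w \<Longrightarrow> w \<le> z \<Longrightarrow> (g has_real_derivative gd w) (at w)"
      using d1 S[OF xy(1) zS] by blast
    from MVT2[OF zx this] obtain a where a: "x < a" "a < z" "g z - g x = (z - x) * gd a"
      by blast
    have "\<And>w. z \<le> w \<Longrightarrow> w \<le> y \<Longrightarrow> (g has_real_derivative gd w) (at w)"
      using d1 S[OF zS xy(2)] by blast
    from MVT2[OF zy this] obtain b where b: "z < b" "b < y" "g y - g z = (y - z) * gd b"
      by blast
    have aS: "a \<in> S" and bS: "b \<in> S" using S xy a b zx zy by (meson less_imp_le less_trans)+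
    have lt: "gd a < gd b" using inc[OF aS bS] a b by simp
    have ex: "z - x = t * (y - x)" and ey: "y - z = (1 - t) * (y - x)" unfolding z_def by (simp_all add: algebra_simps)
    have k: "(1 - t) * t * (y - x) > 0" using t xy by simp
    have l: "(1 - t) * (g z - g x) = ((1 - t) * t * (y - x)) * gd a" unfolding a(3) ex by (simp add: algebra_simps)
    have r: "t * (g y - g z) = ((1 - t) * t * (y - x)) * gd b" unfolding b(3) ey by (simp add: algebra_simps)
    have "(1 - t) * (g z - g x) < t * (g y - g z)"
      unfolding l r using k lt by (rule mult_strict_left_mono[rotated])
    thus ?thesis unfolding z_def[symmetric] by (simp add: algebra_simps)
  qed
  show ?thesis unfolding strict_convex_on_def
  proof (intro ballI allI impI)
    fix x y :: real and t :: real assume x: "x \<in> S" and y: "y \<in> S" and ne: "x \<noteq> y" and t: "0 < t \<and> t < 1"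
    show "g ((1 - t) * x + t * y) < (1 - t) * g x + t * g y"
    proof (cases "x < y")
      case True thus ?thesis using main x y t by auto
    next
      case False
      hence "y < x" using ne by simp
      from main[OF y x this, of "1 - t"] t show ?thesis by (simp add: algebra_simps)
    qed
  qed
qed




context
  fixes \<nu> :: real
  assumes nu: "\<nu> > -1"
begin

abbreviation "f \<equiv> eval_fps (Ffps \<nu>)"
abbreviation "f1 \<equiv> eval_fps (fps_deriv (Ffps \<nu>))"
abbreviation "f2 \<equiv> eval_fps (fps_deriv (fps_deriv (Ffps \<nu>)))"

lemma radF: "fps_conv_radius (Ffps \<nu>) = \<infinity>"
  using fps_conv_radius_deriv[of "Efps \<nu>"] Efps_radius[OF nu] by (simp add: Ffps_def)

lemma radF1: "fps_conv_radius (fps_deriv (Ffps \<nu>)) = \<infinity>"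
  using fps_conv_radius_deriv[of "Ffps \<nu>"] radF by simp

lemma radF2: "fps_conv_radius (fps_deriv (fps_deriv (Ffps \<nu>))) = \<infinity>"
  using fps_conv_radius_deriv[of "fps_deriv (Ffps \<nu>)"] radF1 by simp

lemma radM1: "fps_conv_radius (Ffps \<nu> * fps_deriv (fps_deriv (Ffps \<nu>))) = \<infinity>"
  using fps_conv_radius_mult[of "Ffps \<nu>" "fps_deriv (fps_deriv (Ffps \<nu>))"] radF radF2 by simp

lemma radM2: "fps_conv_radius (fps_deriv (Ffps \<nu>) * fps_deriv (Ffps \<nu>)) = \<infinity>"
  using fps_conv_radius_mult[of "fps_deriv (Ffps \<nu>)" "fps_deriv (Ffps \<nu>)"] radF1 by simp

lemma radP: "fps_conv_radius (Pfps \<nu>) = \<infinity>"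
proof -
  have "fps_conv_radius (Pfps \<nu>) \<ge> min (fps_conv_radius (Ffps \<nu> * fps_deriv (fps_deriv (Ffps \<nu>))))
          (fps_conv_radius (fps_deriv (Ffps \<nu>) * fps_deriv (Ffps \<nu>)))"
    unfolding Pfps_def by (rule fps_conv_radius_diff)
  moreover have "fps_conv_radius (Ffps \<nu> * fps_deriv (fps_deriv (Ffps \<nu>))) = \<infinity>"
    using fps_conv_radius_mult[of "Ffps \<nu>" "fps_deriv (fps_deriv (Ffps \<nu>))"] radF radF2 by simp
  moreover have "fps_conv_radius (fps_deriv (Ffps \<nu>) * fps_deriv (Ffps \<nu>)) = \<infinity>"
    using fps_conv_radius_mult[of "fps_deriv (Ffps \<nu>)" "fps_deriv (Ffps \<nu>)"] radF1 by simp
  ultimately show ?thesis by simp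
qed

lemma deriv_Ical: "deriv (Ical \<nu>) = f"
proof
  fix x
  show "deriv (Ical \<nu>) x = f x"
    unfolding Ical_eval[OF nu] Ffps_def using Efps_radius[OF nu]
    by (intro eval_fps_deriv[symmetric]) simp
qed

lemma df: "(f has_real_derivative f1 x) (at x)"
  by (rule has_field_derivative_eval_fps) (simp add: radF)

lemma df1: "(f1 has_real_derivative f2 x) (at x)"
  by (rule has_field_derivative_eval_fps) (simp add: radF1)

lemma P_eval: "eval_fps (Pfps \<nu>) x = f x * f2 x - f1 x * f1 x"
  unfolding Pfps_def using radF radF1 radF2
  by (simp add: eval_fps_diff radM1 radM2 eval_fps_mult)

lemma F_nonneg: "fps_nth (Ffps \<nu>) n \<ge> 0"
proof (cases "even n")
  case True then obtain k where "n = 2*k" by blast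
  thus ?thesis by (simp add: F_nth_even)
next
  case False then obtain k where "n = 2*k+1" by (metis oddE)
  thus ?thesis using acoef_pos[OF nu, of "Suc k"] F_nth_odd[of \<nu> k] by simp
qed

lemma f_pos: "x > 0 \<Longrightarrow> f x > 0"
proof -
  assume x: "x > 0"
  have "0 < suminf (\<lambda>n. fps_nth (Ffps \<nu>) n * x ^ n)"
  proof (rule suminf_pos2[where i=1])
    show "summable (\<lambda>n. fps_nth (Ffps \<nu>) n * x ^ n)" by (rule summable_fps) (simp add: radF)
    show "0 \<le> fps_nth (Ffps \<nu>) n * x ^ n" for n using F_nonneg x by simp
    show "0 < fps_nth (Ffps \<nu>) 1 * x ^ 1" using F1[OF nu] nu x by simp
  qed
  thus ?thesis by (simp add: eval_fps_def)
qed

lemma logconc: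
  assumes S: "\<And>x y z. x \<in> S \<Longrightarrow> y \<in> S \<Longrightarrow> x \<le> z \<Longrightarrow> z \<le> y \<Longrightarrow> z \<in> S"
    and pos: "\<And>x. x \<in> S \<Longrightarrow> x > 0" and neg: "\<And>x. x \<in> S \<Longrightarrow> eval_fps (Pfps \<nu>) x < 0"
  shows "strict_log_concave_on S (deriv (Ical \<nu>))"
  unfolding strict_log_concave_on_def deriv_Ical
proof
  show "\<forall>x\<in>S. 0 < f x" using f_pos pos by blast
  show "strict_convex_on S (\<lambda>x. - ln (f x))"
  proof (rule strict_convex_deriv2[where gd = "\<lambda>x. - (f1 x / f x)"
           and gdd = "\<lambda>x. - ((f2 x * f x - f1 x * f1 x) / (f x * f x))"])
    show "\<And>x y z. x \<in> S \<Longrightarrow> y \<in> S \<Longrightarrow> x \<le> z \<Longrightarrow> z \<le> y \<Longrightarrow> z \<in> S" by (rule S)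
  next
    fix x assume "x \<in> S"
    hence fx: "f x > 0" using f_pos pos by blast
    show "((\<lambda>x. - ln (f x)) has_real_derivative - (f1 x / f x)) (at x)"
      using DERIV_minus[OF DERIV_chain2[OF DERIV_ln_divide[OF fx] df]] by simp
    show "((\<lambda>x. - (f1 x / f x)) has_real_derivative - ((f2 x * f x - f1 x * f1 x) / (f x * f x))) (at x)"
      using DERIV_minus[OF DERIV_divide[OF df1 df]] fx by simp
    have "f2 x * f x - f1 x * f1 x < 0" using neg[OF \<open>x \<in> S\<close>] unfolding P_eval by (simp add: mult.commute)
    thus "- ((f2 x * f x - f1 x * f1 x) / (f x * f x)) > 0" using fx by (simp add: divide_neg_pos)
  qed
qed

lemma logconv:
  assumes S: "\<And>x y z. x \<in> S \<Longrightarrow> y \<in> S \<Longrightarrow> x \<le> z \<Longrightarrow> z \<le> y \<Longrightarrow> z \<in> S"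
    and pos: "\<And>x. x \<in> S \<Longrightarrow> x > 0" and ps: "\<And>x. x \<in> S \<Longrightarrow> eval_fps (Pfps \<nu>) x > 0"
  shows "strict_log_convex_on S (deriv (Ical \<nu>))"
  unfolding strict_log_convex_on_def deriv_Ical
proof
  show "\<forall>x\<in>S. 0 < f x" using f_pos pos by blast
  show "strict_convex_on S (\<lambda>x. ln (f x))"
  proof (rule strict_convex_deriv2[where gd = "\<lambda>x. f1 x / f x"
           and gdd = "\<lambda>x. (f2 x * f x - f1 x * f1 x) / (f x * f x)"])
    show "\<And>x y z. x \<in> S \<Longrightarrow> y \<in> S \<Longrightarrow> x \<le> z \<Longrightarrow> z \<le> y \<Longrightarrow> z \<in> S" by (rule S)
  next
    fix x assume "x \<in> S"
    hence fx: "f x > 0" using f_pos pos by blast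
    show "((\<lambda>x. ln (f x)) has_real_derivative f1 x / f x) (at x)"
      using DERIV_chain2[OF DERIV_ln_divide[OF fx] df] by simp
    show "((\<lambda>x. f1 x / f x) has_real_derivative (f2 x * f x - f1 x * f1 x) / (f x * f x)) (at x)"
      using DERIV_divide[OF df1 df] fx by simp
    have "f2 x * f x - f1 x * f1 x > 0" using ps[OF \<open>x \<in> S\<close>] unfolding P_eval by (simp add: mult.commute)
    thus "(f2 x * f x - f1 x * f1 x) / (f x * f x) > 0" using fx by simp
  qed
qed

lemma P_sums: "(\<lambda>k. P \<nu> k * x ^ k) sums eval_fps (Pfps \<nu>) x"
  by (rule sums_eval_fps) (simp add: radP)

end



context
  fixes \<nu> :: real
  assumes nu: "\<nu> > -1"
begin

abbreviation "PP k \<equiv> fps_nth (Pfps \<nu>) k"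
abbreviation "R \<equiv> eval_fps (Pfps \<nu>)"

lemma Pneg_a:
  assumes c: "2*\<nu>+1 \<le> 0" and x: "x > 0"
  shows "R x < 0"
proof -
  have "R x \<le> PP 0 * x^0"
  proof (rule sums_le[OF _ P_sums[OF nu] sums_single[of 0 "\<lambda>k. PP k * x^k"]])
    fix k show "PP k * x^k \<le> (if k = 0 then PP k * x^k else 0)"
    proof (cases "k = 0")
      case False
      hence "PP k \<le> 0" using P_sign_neg[OF nu c, of k] by simp
      thus ?thesis using False x by (simp add: mult_nonpos_nonneg)
    qed simp
  qed
  thus ?thesis using P0[OF nu] A2_pos[OF nu] by simp
qed

lemma R_mono:
  assumes c: "2*\<nu>+1 > 0" and x: "0 \<le> x" and xy: "x < y"
  shows "R x < R y"
proof -
  have s: "(\<lambda>k. PP k * y^k - PP k * x^k) sums (R y - R x)"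
    by (rule sums_diff[OF P_sums[OF nu] P_sums[OF nu]])
  have "0 < suminf (\<lambda>k. PP k * y^k - PP k * x^k)"
  proof (rule suminf_pos2[where i=4])
    show "summable (\<lambda>k. PP k * y^k - PP k * x^k)" using s by (simp add: sums_iff)
    show "0 \<le> PP k * y^k - PP k * x^k" for k
    proof (cases "k = 0")
      case False
      hence "PP k \<ge> 0" using P_sign_pos[OF nu, of k] c by simp
      moreover have "x^k \<le> y^k" using x xy by (intro power_mono) auto
      ultimately show ?thesis by (simp add: mult_left_mono)
    qed simp
    have "x^4 < y^4" using x xy by (intro power_strict_mono) auto
    thus "0 < PP 4 * y^4 - PP 4 * x^4" using P4_pos[OF nu c] by simp
  qed
  thus ?thesis using s by (simp add: sums_iff)
qed

lemma R_big:
  assumes c: "2*\<nu>+1 > 0"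
  shows "\<exists>M>0. R M > 0"
proof -
  define M where "M = A \<nu> 2 / PP 4 + 1"
  have p4: "PP 4 > 0" using P4_pos[OF nu c] .
  have M1: "M \<ge> 1" unfolding M_def using p4 A2_pos[OF nu] by simp
  have "M ^ 1 \<le> M ^ 4" using M1 by (intro power_increasing) auto
  hence "PP 4 * M \<le> PP 4 * M^4" using p4 by simp
  moreover have "PP 4 * M = A \<nu> 2 + PP 4" unfolding M_def using p4 by (simp add: field_simps)
  ultimately have big: "PP 4 * M^4 > A \<nu> 2" using p4 by linarith
  have "sum (\<lambda>k. PP k * M^k) {0,4} \<le> suminf (\<lambda>k. PP k * M^k)"
  proof (rule sum_le_suminf)
    show "summable (\<lambda>k. PP k * M^k)" using P_sums[OF nu] by (simp add: sums_iff)
    show "0 \<le> PP n * M^n" if "n \<in> - {0,4}" for n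
      using that P_sign_pos[OF nu, of n] c M1 by simp
  qed simp
  hence "PP 0 + PP 4 * M^4 \<le> R M" using P_sums[OF nu, of M] by (simp add: sums_iff)
  hence "R M > 0" using big P0[OF nu] by simp
  thus ?thesis using M1 by (intro exI[of _ M]) auto
qed

lemma w_sums:
  "(\<lambda>j. if j = 0 then - A \<nu> 2 else A \<nu> 2 * (1/fact (j-1) - 1/fact j)) sums 0"
proof -
  define t where "t n = - A \<nu> 2 / fact n" for n
  have "(\<lambda>n. inverse (fact n) * (1::real)^n) \<longlonglongrightarrow> 0"
    by (rule summable_LIMSEQ_zero[OF summable_exp])
  hence "(\<lambda>n. - A \<nu> 2 * inverse (fact n)) \<longlonglongrightarrow> - A \<nu> 2 * 0"
    by (intro tendsto_mult_left) simp
  hence "t \<longlonglongrightarrow> 0" unfolding t_def by (simp add: divide_inverse)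
  hence "(\<lambda>n. t (Suc n) - t n) sums (0 - t 0)" by (rule telescope_sums)
  moreover have "(\<lambda>n. t (Suc n) - t n) = (\<lambda>n. (\<lambda>j. if j = 0 then - A \<nu> 2 else A \<nu> 2 * (1/fact (j-1) - 1/fact j)) (Suc n))"
    unfolding t_def by (auto simp: algebra_simps)
  ultimately have "(\<lambda>n. (\<lambda>j. if j = 0 then - A \<nu> 2 else A \<nu> 2 * (1/fact (j-1) - 1/fact j)) (Suc n)) sums (A \<nu> 2)"
    unfolding t_def by simp
  thus ?thesis by (subst (asm) sums_Suc_iff) simp
qed

lemma R_x0:
  assumes c: "2*\<nu>+1 > 0"
  shows "R (sqrt (2*(\<nu>+3))) < 0"
proof -
  have nu2: "\<nu> > -1/2" using c by simp
  define x0 where "x0 = sqrt (2*(\<nu>+3))"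
  have x0sq: "x0^2 = sv \<nu>" unfolding x0_def sv_def[OF nu2] using nu by simp
  define U where "U j = PP (2*j) * sv \<nu> ^ j" for j
  define w where "w j = (if j = 0 then - A \<nu> 2 else A \<nu> 2 * (1/fact (j-1) - 1/fact j))" for j
  have z: "PP n * x0^n = 0" if "n \<notin> range (\<lambda>j. 2*j)" for n
  proof -
    have "odd n" using that by (metis evenE rangeI)
    thus ?thesis using P_odd[OF nu] by simp
  qed
  have "(\<lambda>j. (\<lambda>k. PP k * x0^k) (2*j)) sums R x0"
    by (subst sums_mono_reindex[of "\<lambda>j. 2*j", OF _ z]) (auto simp: strict_mono_def P_sums[OF nu])
  hence Us: "U sums R x0" unfolding U_def by (simp add: power_mult x0sq)
  have ws: "w sums 0" unfolding w_def by (rule w_sums)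
  have P2: "PP 2 = 0"
  proof -
    have "PP 2 * 2 * (real 2 + 2*\<nu> + 1) = (real 2 - 2) * (2*\<nu>+1) * A \<nu> (2+2)" by (rule Pform[OF nu])
    moreover have "real 2 + 2*\<nu> + 1 > 0" using nu by simp
    ultimately show ?thesis by simp
  qed
  have le: "U j \<le> w j" for j
  proof -
    consider "j = 0" | "j = 1" | "j \<ge> 2" by linarith
    thus ?thesis
    proof cases
      case 1 thus ?thesis unfolding U_def w_def using P0[OF nu] by simp
    next
      case 2 thus ?thesis unfolding U_def w_def using P2 by simp
    next
      case 3 thus ?thesis unfolding U_def w_def using U_bound[OF nu2 3] by simp
    qed
  qed
  have "0 < suminf (\<lambda>j. w j - U j)"
  proof (rule suminf_pos2[where i=2])
    show "summable (\<lambda>j. w j - U j)" using sums_diff[OF ws Us] by (simp add: sums_iff)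
    show "0 \<le> w j - U j" for j using le[of j] by simp
    show "0 < w 2 - U 2" unfolding U_def w_def using U_bound[OF nu2, of 2] by simp
  qed
  moreover have "suminf (\<lambda>j. w j - U j) = 0 - R x0" using sums_diff[OF ws Us] by (simp add: sums_iff)
  ultimately show ?thesis unfolding x0_def by simp
qed

lemma R_cont: "continuous_on S R"
  using continuous_on_eval_fps[of "Pfps \<nu>"] radP[OF nu] by (auto intro: continuous_on_subset)

end

theorem theorem1:
  shows "(\<forall>\<nu>::real. -1 < \<nu> \<and> \<nu> \<le> -1/2 \<longrightarrow>
            strict_log_concave_on {0<..} (deriv (Ical \<nu>)))
       \<and> (\<forall>\<nu>::real. -1 < \<nu> \<longrightarrow>
            strict_log_concave_on {0<..<sqrt (2 * (\<nu> + 3))} (deriv (Ical \<nu>)))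
       \<and> (\<forall>\<nu>::real. -1/2 < \<nu> \<longrightarrow>
            (\<exists>x\<^sub>\<nu>. sqrt (2 * (\<nu> + 3)) < x\<^sub>\<nu> \<and>
               strict_log_concave_on {0<..<x\<^sub>\<nu>} (deriv (Ical \<nu>)) \<and>
               strict_log_convex_on {x\<^sub>\<nu><..} (deriv (Ical \<nu>))))"
proof (intro conjI allI impI)
  fix \<nu> :: real assume h: "-1 < \<nu> \<and> \<nu> \<le> -1/2"
  hence nu: "\<nu> > -1" and c: "2*\<nu>+1 \<le> 0" by auto
  show "strict_log_concave_on {0<..} (deriv (Ical \<nu>))"
    by (rule logconc[OF nu]) (use Pneg_a[OF nu c] in auto)
next
  fix \<nu> :: real assume nu: "-1 < \<nu>"
  show "strict_log_concave_on {0<..<sqrt (2 * (\<nu> + 3))} (deriv (Ical \<nu>))"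
  proof (rule logconc[OF nu])
    fix x assume x: "x \<in> {0<..<sqrt (2 * (\<nu> + 3))}"
    show "eval_fps (Pfps \<nu>) x < 0"
    proof (cases "2*\<nu>+1 \<le> 0")
      case True thus ?thesis using Pneg_a[OF nu True] x by simp
    next
      case False
      hence c: "2*\<nu>+1 > 0" by simp
      have "eval_fps (Pfps \<nu>) x < eval_fps (Pfps \<nu>) (sqrt (2*(\<nu>+3)))"
        using R_mono[OF nu c] x by simp
      thus ?thesis using R_x0[OF nu c] by simp
    qed
  qed auto
next
  fix \<nu> :: real assume nu2: "-1/2 < \<nu>"
  hence nu: "\<nu> > -1" and c: "2*\<nu>+1 > 0" by auto
  define x0 where "x0 = sqrt (2*(\<nu>+3))"
  have x0pos: "x0 > 0" unfolding x0_def using nu by simp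
  have Rx0: "eval_fps (Pfps \<nu>) x0 < 0" unfolding x0_def by (rule R_x0[OF nu c])
  obtain M where M: "M > 0" "eval_fps (Pfps \<nu>) M > 0" using R_big[OF nu c] by blast
  have x0M: "x0 < M"
  proof (rule ccontr)
    assume "\<not> x0 < M"
    hence "M \<le> x0" by simp
    hence "eval_fps (Pfps \<nu>) M \<le> eval_fps (Pfps \<nu>) x0"
      using R_mono[OF nu c, of M x0] M by (cases "M = x0") auto
    thus False using M Rx0 by simp
  qed
  obtain xn where xn: "x0 \<le> xn" "xn \<le> M" "eval_fps (Pfps \<nu>) xn = 0"
    using IVT'[of "eval_fps (Pfps \<nu>)" x0 0 M] Rx0 M x0M R_cont[OF nu] by force
  have xn0: "x0 < xn" using xn Rx0 by (cases "x0 = xn") auto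
  show "\<exists>x\<^sub>\<nu>. sqrt (2 * (\<nu> + 3)) < x\<^sub>\<nu> \<and>
               strict_log_concave_on {0<..<x\<^sub>\<nu>} (deriv (Ical \<nu>)) \<and>
               strict_log_convex_on {x\<^sub>\<nu><..} (deriv (Ical \<nu>))"
  proof (intro exI conjI)
    show "sqrt (2 * (\<nu> + 3)) < xn" using xn0 unfolding x0_def .
    show "strict_log_concave_on {0<..<xn} (deriv (Ical \<nu>))"
    proof (rule logconc[OF nu])
      fix x assume "x \<in> {0<..<xn}"
      thus "eval_fps (Pfps \<nu>) x < 0" using R_mono[OF nu c, of x xn] xn by simp
    qed auto
    show "strict_log_convex_on {xn<..} (deriv (Ical \<nu>))"
    proof (rule logconv[OF nu])
      fix x assume "x \<in> {xn<..}"
      thus "eval_fps (Pfps \<nu>) x > 0" using R_mono[OF nu c, of xn x] xn xn0 x0pos by simp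
    qed (use xn0 x0pos in auto)
  qed
qed


end
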